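(* Let $n\ge 2$, $d\ge n+1$, and let $f$ be a Perazzo form of degree $d$ in $S$ with $A_f$ having $h$-vector $(h_0,\dots,h_d)$. If $A_f$ has the weak Lefschetz property, then $\#\{i\mid h_i=d+2\}\le 1$.
   Context: $K$ is an algebraically closed field of characteristic zero. $S=K[x_0,\dots,x_n,u,v]$ and $R=K[y_0,\dots,y_n,U,V]$ acts on $S$ by differentiation ($y_i=\partial/\partial x_i$, $U=\partial/\partial u$, $V=\partial/\partial v$); write $\theta\circ f$ for this action. A Perazzo form of degree $d$ is $f=x_0p_0+x_1p_1+\cdots+x_np_n+g$ where $p_0,\dots,p_n\in K[u,v]_{d-1}$ are linearly independent but algebraically dependent forms and $g\in K[u,v]_d$. $\operatorname{Ann}_R(f)=\{\theta\in R:\theta\circ f=0\}$ and $A_f=R/\operatorname{Ann}_R(f)$ is a graded artinian Gorenstein algebra of socle degree $d$; its $h$-vector is $h_i=\dim_K [A_f]_i$, and satisfies $h_i=h_{d-i}$. A graded artinian algebra $A$ has the weak Lefschetz property (WLP) if there is $\ell\in[A]_1$ such that multiplication $\times\ell:[A]_i\to[A]_{i+1}$ has maximal rank (is injective or surjective) for every $i\ge 0$. *)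

theory Defs
  imports Main "HOL-Library.Poly_Mapping" "HOL-Computational_Algebra.Polynomial"
begin

(* In S (and R) the variables are indexed by
  0..n (x_0..x_n resp. y_0..y_n), n+1 (u resp. U) and n+2 (v resp. V).*)

type_synonym 'a mpoly = "(nat \<Rightarrow>\<^sub>0 nat) \<Rightarrow>\<^sub>0 'a"

definition alg_closed :: "'a::field itself \<Rightarrow> bool" where
  "alg_closed _ \<longleftrightarrow> (\<forall>q::'a poly. Polynomial.degree q > 0 \<longrightarrow> (\<exists>x. poly q x = 0))"

definition mscale :: "'a::field \<Rightarrow> 'a mpoly \<Rightarrow> 'a mpoly" where
  "mscale c p = Poly_Mapping.map (\<lambda>a. c * a) p"

lemma vector_space_mscale: "vector_space (mscale :: 'a::field \<Rightarrow> 'a mpoly \<Rightarrow> 'a mpoly)"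
  unfolding mscale_def
  by unfold_locales
     (simp_all add: poly_mapping_eq_iff fun_eq_iff map.rep_eq plus_poly_mapping.rep_eq
        when_def algebra_simps flip: distrib_left)

definition mvar :: "nat \<Rightarrow> 'a::field mpoly" where
  "mvar k = Poly_Mapping.single (Poly_Mapping.single k 1) 1"

definition mon_deg :: "(nat \<Rightarrow>\<^sub>0 nat) \<Rightarrow> nat" where
  "mon_deg \<alpha> = (\<Sum>k\<in>Poly_Mapping.keys \<alpha>. Poly_Mapping.lookup \<alpha> k)"

definition forms :: "nat set \<Rightarrow> nat \<Rightarrow> 'a::field mpoly set" where
  "forms V i = {p. \<forall>\<alpha>\<in>Poly_Mapping.keys p. Poly_Mapping.keys \<alpha> \<subseteq> V \<and> mon_deg \<alpha> = i}"

definition polys_in :: "nat set \<Rightarrow> 'a::field mpoly set" where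
  "polys_in V = {p. \<forall>\<alpha>\<in>Poly_Mapping.keys p. Poly_Mapping.keys \<alpha> \<subseteq> V}"

(* Action of R on S by differentiation: y^\<beta> \<circ> x^\<alpha> = \<alpha>!/(\<alpha>-\<beta>)! x^(\<alpha>-\<beta>) if \<beta> \<le> \<alpha>, else 0,
  extended bilinearly.*)
definition mon_diff_coeff :: "(nat \<Rightarrow>\<^sub>0 nat) \<Rightarrow> (nat \<Rightarrow>\<^sub>0 nat) \<Rightarrow> nat" where
  "mon_diff_coeff \<beta> \<alpha> =
     (\<Prod>k\<in>Poly_Mapping.keys \<alpha>. fact (Poly_Mapping.lookup \<alpha> k) div fact (Poly_Mapping.lookup \<alpha> k - Poly_Mapping.lookup \<beta> k))"

definition apolar :: "'a::field mpoly \<Rightarrow> 'a mpoly \<Rightarrow> 'a mpoly" where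
  "apolar \<theta> f = (\<Sum>\<beta>\<in>Poly_Mapping.keys \<theta>. \<Sum>\<alpha>\<in>Poly_Mapping.keys f.
      if (\<forall>k. Poly_Mapping.lookup \<beta> k \<le> Poly_Mapping.lookup \<alpha> k)
      then Poly_Mapping.single (\<alpha> - \<beta>)
             (Poly_Mapping.lookup \<theta> \<beta> * Poly_Mapping.lookup f \<alpha> * of_nat (mon_diff_coeff \<beta> \<alpha>))
      else 0)"

definition msubst :: "'a::field mpoly \<Rightarrow> (nat \<Rightarrow> 'a mpoly) \<Rightarrow> 'a mpoly" where
  "msubst F p = (\<Sum>\<gamma>\<in>Poly_Mapping.keys F.
      mscale (Poly_Mapping.lookup F \<gamma>) (\<Prod>k\<in>Poly_Mapping.keys \<gamma>. p k ^ Poly_Mapping.lookup \<gamma> k))"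

definition perazzo_form :: "nat \<Rightarrow> nat \<Rightarrow> 'a::field mpoly \<Rightarrow> bool" where
  "perazzo_form n d f \<longleftrightarrow> (\<exists>p g.
     (\<forall>i\<le>n. p i \<in> forms {n+1, n+2} (d - 1)) \<and>
     (\<forall>c. (\<Sum>i\<le>n. mscale (c i) (p i)) = 0 \<longrightarrow> (\<forall>i\<le>n. c i = 0)) \<and>
     (\<exists>F. F \<noteq> 0 \<and> F \<in> polys_in {..n} \<and> msubst F p = 0) \<and>
     g \<in> forms {n+1, n+2} d \<and>
     f = (\<Sum>i\<le>n. mvar i * p i) + g)"

definition Ann :: "nat \<Rightarrow> 'a::field mpoly \<Rightarrow> 'a mpoly set" where
  "Ann n f = {\<theta> \<in> polys_in {..n+2}. apolar \<theta> f = 0}"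

definition hvec :: "nat \<Rightarrow> 'a::field mpoly \<Rightarrow> nat \<Rightarrow> nat" where
  "hvec n f i = vector_space.dim mscale (forms {..n+2} i :: 'a mpoly set)
               - vector_space.dim mscale (Ann n f \<inter> forms {..n+2} i)"

(* WLP for A_f: some linear form l (a representative in R_1 of an element of [A_f]_1)
  such that each multiplication map [A_f]_i \<rightarrow> [A_f]_(i+1) is injective or surjective.*)
definition WLP :: "nat \<Rightarrow> 'a::field mpoly \<Rightarrow> bool" where
  "WLP n f \<longleftrightarrow> (\<exists>l\<in>forms {..n+2} 1. \<forall>i.
     (\<forall>\<theta>\<in>forms {..n+2} i. l * \<theta> \<in> Ann n f \<longrightarrow> \<theta> \<in> Ann n f) \<or>
     (\<forall>\<eta>\<in>forms {..n+2} (i+1). \<exists>\<theta>\<in>forms {..n+2} i. \<eta> - l * \<theta> \<in> Ann n f))"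

end

theory Submission
  imports Defs "HOL-Library.FuncSet"
begin

interpretation mv: vector_space "mscale :: 'a::field \<Rightarrow> 'a mpoly \<Rightarrow> 'a mpoly"
  by (rule vector_space_mscale)

definition mon :: "(nat \<Rightarrow>\<^sub>0 nat) \<Rightarrow> 'a::field mpoly" where
  "mon \<alpha> = Poly_Mapping.single \<alpha> 1"

abbreviation mle :: "(nat \<Rightarrow>\<^sub>0 nat) \<Rightarrow> (nat \<Rightarrow>\<^sub>0 nat) \<Rightarrow> bool" where
  "mle \<beta> \<alpha> \<equiv> (\<forall>k. Poly_Mapping.lookup \<beta> k \<le> Poly_Mapping.lookup \<alpha> k)"

lemma lookup_mscale[simp]: "Poly_Mapping.lookup (mscale c p) k = c * Poly_Mapping.lookup p k"
  by (simp add: mscale_def map.rep_eq when_def)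

lemma mscale_single[simp]: "mscale c (Poly_Mapping.single k a) = Poly_Mapping.single k (c*a)"
  by (simp add: poly_mapping_eq_iff fun_eq_iff lookup_single when_def)

lemma mscale_conv: "mscale c p = Poly_Mapping.single 0 c * p"
proof -
  have "(\<lambda>a. c * a) = (*) c" by auto
  then show ?thesis by (simp add: mscale_def mult_map_scale_conv_mult)
qed

lemma mscale_mult_left: "mscale c p * q = mscale c (p * q)"
  by (simp add: mscale_conv mult.assoc)

lemma mscale_mult_right: "p * mscale c q = mscale c (p * (q::'a::field mpoly))"
  by (simp add: mscale_conv mult.left_commute)

lemma mscale_minus1: "mscale (-1) p = - p"
  by (simp add: poly_mapping_eq_iff fun_eq_iff)

lemma keys_mscale: "Poly_Mapping.keys (mscale c p) \<subseteq> Poly_Mapping.keys p"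
  by (auto simp: in_keys_iff)

lemma expand: "p = (\<Sum>\<alpha>\<in>Poly_Mapping.keys p. mscale (Poly_Mapping.lookup p \<alpha>) (mon \<alpha>))"
proof (rule poly_mapping_eqI)
  fix k
  have "Poly_Mapping.lookup (\<Sum>\<alpha>\<in>Poly_Mapping.keys p. mscale (Poly_Mapping.lookup p \<alpha>) (mon \<alpha>)) k
      = (\<Sum>\<alpha>\<in>Poly_Mapping.keys p. if \<alpha> = k then Poly_Mapping.lookup p \<alpha> else 0)"
    by (auto simp: lookup_sum mon_def lookup_single when_def intro!: sum.cong)
  also have "\<dots> = Poly_Mapping.lookup p k"
    by (simp add: in_keys_iff)
  finally show "Poly_Mapping.lookup p k = Poly_Mapping.lookup (\<Sum>\<alpha>\<in>Poly_Mapping.keys p. mscale (Poly_Mapping.lookup p \<alpha>) (mon \<alpha>)) k" by simp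
qed

abbreviation lin :: "('a::field mpoly \<Rightarrow> 'a mpoly) \<Rightarrow> bool" where
  "lin F \<equiv> module_hom mscale mscale F"

lemma linI:
  assumes "\<And>p q. F (p + q) = F p + F q" "\<And>c p. F (mscale c p) = mscale c (F p)"
  shows "lin F"
  using assms vector_space_mscale
  by (simp add: module_hom_iff module_iff_vector_space)

lemma lin_ext:
  assumes "lin F" "lin G" "\<And>\<alpha>. F (mon \<alpha>) = G (mon \<alpha>)"
  shows "F p = G p"
proof -
  have "F p = F (\<Sum>\<alpha>\<in>Poly_Mapping.keys p. mscale (Poly_Mapping.lookup p \<alpha>) (mon \<alpha>))"
    by (subst expand, rule refl)
  also have "\<dots> = (\<Sum>\<alpha>\<in>Poly_Mapping.keys p. mscale (Poly_Mapping.lookup p \<alpha>) (G (mon \<alpha>)))"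
    using assms by (simp add: module_hom.sum module_hom.scale)
  also have "\<dots> = G (\<Sum>\<alpha>\<in>Poly_Mapping.keys p. mscale (Poly_Mapping.lookup p \<alpha>) (mon \<alpha>))"
    using assms by (simp add: module_hom.sum module_hom.scale)
  also have "\<dots> = G p" by (subst (2) expand, rule refl)
  finally show ?thesis .
qed

lemma lin_comp: "lin F \<Longrightarrow> lin G \<Longrightarrow> lin (\<lambda>x. F (G x))"
  by (rule linI) (simp_all add: module_hom.add module_hom.scale)

definition apT :: "'a::field mpoly \<Rightarrow> 'a mpoly \<Rightarrow> (nat \<Rightarrow>\<^sub>0 nat) \<Rightarrow> (nat \<Rightarrow>\<^sub>0 nat) \<Rightarrow> 'a mpoly" where
  "apT \<theta> f \<beta> \<alpha> = (if mle \<beta> \<alpha>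
      then Poly_Mapping.single (\<alpha> - \<beta>)
             (Poly_Mapping.lookup \<theta> \<beta> * Poly_Mapping.lookup f \<alpha> * of_nat (mon_diff_coeff \<beta> \<alpha>))
      else 0)"

lemma apT_zero1: "\<beta> \<notin> Poly_Mapping.keys \<theta> \<Longrightarrow> apT \<theta> f \<beta> \<alpha> = 0"
  by (simp add: apT_def in_keys_iff)

lemma apT_zero2: "\<alpha> \<notin> Poly_Mapping.keys f \<Longrightarrow> apT \<theta> f \<beta> \<alpha> = 0"
  by (simp add: apT_def in_keys_iff)

lemma apT_scale1: "apT (mscale c \<theta>) f \<beta> \<alpha> = mscale c (apT \<theta> f \<beta> \<alpha>)"
  by (simp add: apT_def mult.assoc)

lemma apT_scale2: "apT \<theta> (mscale c f) \<beta> \<alpha> = mscale c (apT \<theta> f \<beta> \<alpha>)"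
  by (simp add: apT_def mult.assoc mult.left_commute)

lemma apolar_sup:
  assumes "finite B" "Poly_Mapping.keys \<theta> \<subseteq> B" "finite A" "Poly_Mapping.keys f \<subseteq> A"
  shows "apolar \<theta> f = (\<Sum>\<beta>\<in>B. \<Sum>\<alpha>\<in>A. apT \<theta> f \<beta> \<alpha>)"
proof -
  have "apolar \<theta> f = (\<Sum>\<beta>\<in>Poly_Mapping.keys \<theta>. \<Sum>\<alpha>\<in>Poly_Mapping.keys f. apT \<theta> f \<beta> \<alpha>)"
    by (simp add: apolar_def apT_def)
  also have "\<dots> = (\<Sum>\<beta>\<in>Poly_Mapping.keys \<theta>. \<Sum>\<alpha>\<in>A. apT \<theta> f \<beta> \<alpha>)"
    by (intro sum.cong refl sum.mono_neutral_left assms) (auto simp: apT_zero2)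
  also have "\<dots> = (\<Sum>\<beta>\<in>B. \<Sum>\<alpha>\<in>A. apT \<theta> f \<beta> \<alpha>)"
    by (intro sum.mono_neutral_left assms) (auto simp: apT_zero1)
  finally show ?thesis .
qed

lemma apolar_add_left: "apolar (\<theta>1 + \<theta>2) f = apolar \<theta>1 f + apolar \<theta>2 f"
proof -
  let ?B = "Poly_Mapping.keys \<theta>1 \<union> Poly_Mapping.keys \<theta>2"
  have k: "Poly_Mapping.keys (\<theta>1 + \<theta>2) \<subseteq> ?B" by (rule keys_add)
  have "apolar (\<theta>1 + \<theta>2) f = (\<Sum>\<beta>\<in>?B. \<Sum>\<alpha>\<in>Poly_Mapping.keys f. apT (\<theta>1 + \<theta>2) f \<beta> \<alpha>)"
    by (rule apolar_sup) (use k in auto)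
  also have "\<dots> = (\<Sum>\<beta>\<in>?B. \<Sum>\<alpha>\<in>Poly_Mapping.keys f. apT \<theta>1 f \<beta> \<alpha>)
     + (\<Sum>\<beta>\<in>?B. \<Sum>\<alpha>\<in>Poly_Mapping.keys f. apT \<theta>2 f \<beta> \<alpha>)"
  proof -
    have "apT (\<theta>1 + \<theta>2) f \<beta> \<alpha> = apT \<theta>1 f \<beta> \<alpha> + apT \<theta>2 f \<beta> \<alpha>" for \<beta> \<alpha>
      by (simp add: apT_def lookup_add distrib_right single_add)
    then show ?thesis by (simp add: sum.distrib)
  qed
  also have "\<dots> = apolar \<theta>1 f + apolar \<theta>2 f"
    by (subst (1 2) apolar_sup[of ?B _ "Poly_Mapping.keys f"]) auto
  finally show ?thesis .
qed

lemma apolar_add_right: "apolar \<theta> (f1 + f2) = apolar \<theta> f1 + apolar \<theta> f2"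
proof -
  let ?A = "Poly_Mapping.keys f1 \<union> Poly_Mapping.keys f2"
  have k: "Poly_Mapping.keys (f1 + f2) \<subseteq> ?A" by (rule keys_add)
  have "apolar \<theta> (f1 + f2) = (\<Sum>\<beta>\<in>Poly_Mapping.keys \<theta>. \<Sum>\<alpha>\<in>?A. apT \<theta> (f1 + f2) \<beta> \<alpha>)"
    by (rule apolar_sup) (use k in auto)
  also have "\<dots> = (\<Sum>\<beta>\<in>Poly_Mapping.keys \<theta>. \<Sum>\<alpha>\<in>?A. apT \<theta> f1 \<beta> \<alpha>)
     + (\<Sum>\<beta>\<in>Poly_Mapping.keys \<theta>. \<Sum>\<alpha>\<in>?A. apT \<theta> f2 \<beta> \<alpha>)"
  proof -
    have "apT \<theta> (f1 + f2) \<beta> \<alpha> = apT \<theta> f1 \<beta> \<alpha> + apT \<theta> f2 \<beta> \<alpha>" for \<beta> \<alpha>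
      by (simp add: apT_def lookup_add distrib_right distrib_left single_add)
    then show ?thesis by (simp add: sum.distrib)
  qed
  also have "\<dots> = apolar \<theta> f1 + apolar \<theta> f2"
    by (subst (1 2) apolar_sup[of "Poly_Mapping.keys \<theta>" _ ?A]) auto
  finally show ?thesis .
qed

lemma mscale_sum: "mscale c (sum g A) = (\<Sum>x\<in>A. mscale c (g x))"
  by (rule mv.scale_sum_right)

lemma apolar_scale_left: "apolar (mscale c \<theta>) f = mscale c (apolar \<theta> f)"
proof -
  have "apolar (mscale c \<theta>) f = (\<Sum>\<beta>\<in>Poly_Mapping.keys \<theta>. \<Sum>\<alpha>\<in>Poly_Mapping.keys f. apT (mscale c \<theta>) f \<beta> \<alpha>)"
    by (rule apolar_sup) (use keys_mscale in auto)
  also have "\<dots> = mscale c (\<Sum>\<beta>\<in>Poly_Mapping.keys \<theta>. \<Sum>\<alpha>\<in>Poly_Mapping.keys f. apT \<theta> f \<beta> \<alpha>)"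
    by (simp add: mscale_sum apT_scale1 apT_scale2)
  also have "\<dots> = mscale c (apolar \<theta> f)"
    by (simp add: apolar_def apT_def)
  finally show ?thesis .
qed

lemma apolar_scale_right: "apolar \<theta> (mscale c f) = mscale c (apolar \<theta> f)"
proof -
  have "apolar \<theta> (mscale c f) = (\<Sum>\<beta>\<in>Poly_Mapping.keys \<theta>. \<Sum>\<alpha>\<in>Poly_Mapping.keys f. apT \<theta> (mscale c f) \<beta> \<alpha>)"
    by (rule apolar_sup) (use keys_mscale in auto)
  also have "\<dots> = mscale c (\<Sum>\<beta>\<in>Poly_Mapping.keys \<theta>. \<Sum>\<alpha>\<in>Poly_Mapping.keys f. apT \<theta> f \<beta> \<alpha>)"
    by (simp add: mscale_sum apT_scale1 apT_scale2)
  also have "\<dots> = mscale c (apolar \<theta> f)"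
    by (simp add: apolar_def apT_def)
  finally show ?thesis .
qed

lemma lin_apolar_right: "lin (apolar \<theta>)"
  by (rule linI) (simp_all add: apolar_add_right apolar_scale_right)

lemma lin_apolar_left: "lin (\<lambda>\<theta>. apolar \<theta> f)"
  by (rule linI) (simp_all add: apolar_add_left apolar_scale_left)

lemma apolar_mon_mon: "apolar (mon \<beta>) (mon \<alpha> :: 'a::field mpoly) =
   (if mle \<beta> \<alpha> then mscale (of_nat (mon_diff_coeff \<beta> \<alpha>)) (mon (\<alpha> - \<beta>)) else 0)"
  unfolding apolar_def mon_def by (simp only: keys_single) simp

lemma mon_mult: "mon \<beta> * mon \<gamma> = (mon (\<beta> + \<gamma>) :: 'a::field mpoly)"
  by (simp add: mon_def mult_single)

lemma mvar_mon: "mvar k = mon (Poly_Mapping.single k 1)"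
  by (simp add: mvar_def mon_def)

lemma mdc_sup:
  assumes "finite K" "Poly_Mapping.keys \<alpha> \<subseteq> K"
  shows "mon_diff_coeff \<beta> \<alpha> = (\<Prod>k\<in>K. fact (Poly_Mapping.lookup \<alpha> k) div fact (Poly_Mapping.lookup \<alpha> k - Poly_Mapping.lookup \<beta> k))"
  unfolding mon_diff_coeff_def
  by (rule prod.mono_neutral_left) (use assms in \<open>auto simp: in_keys_iff\<close>)

lemma div_chain_nat:
  fixes a b c :: nat
  assumes "c dvd b" "b dvd a" "c \<noteq> 0" "b \<noteq> 0"
  shows "a div c = (a div b) * (b div c)"
proof -
  obtain p where p: "a = b * p" using assms(2) by blast
  obtain q where q: "b = c * q" using assms(1) by blast
  show ?thesis using assms(3,4) by (simp add: p q mult.assoc mult.commute mult.left_commute)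
qed

lemma fact_div_chain:
  fixes a b g :: nat
  assumes "b + g \<le> a"
  shows "(fact a :: nat) div fact (a - g) * (fact (a - g) div fact (a - g - b)) = fact a div fact (a - (b + g))"
proof -
  have e: "a - g - b = a - (b + g)" by simp
  have "(fact a :: nat) div fact (a - g - b) = fact a div fact (a - g) * (fact (a - g) div fact (a - g - b))"
    by (rule div_chain_nat) (auto intro: fact_dvd)
  then show ?thesis by (simp add: e add.commute)
qed

lemma mdc_comp:
  assumes "mle (\<beta> + \<gamma>) \<alpha>"
  shows "mon_diff_coeff (\<beta> + \<gamma>) \<alpha> = mon_diff_coeff \<gamma> \<alpha> * mon_diff_coeff \<beta> (\<alpha> - \<gamma>)"
proof -
  let ?K = "Poly_Mapping.keys \<alpha>"
  have k2: "Poly_Mapping.keys (\<alpha> - \<gamma>) \<subseteq> ?K"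
    by (auto simp: in_keys_iff lookup_minus)
  have "mon_diff_coeff \<gamma> \<alpha> * mon_diff_coeff \<beta> (\<alpha> - \<gamma>) =
     (\<Prod>k\<in>?K. (fact (Poly_Mapping.lookup \<alpha> k) div fact (Poly_Mapping.lookup \<alpha> k - Poly_Mapping.lookup \<gamma> k))
      * (fact (Poly_Mapping.lookup \<alpha> k - Poly_Mapping.lookup \<gamma> k) div fact (Poly_Mapping.lookup \<alpha> k - Poly_Mapping.lookup \<gamma> k - Poly_Mapping.lookup \<beta> k)))"
    by (simp add: mdc_sup[of ?K \<alpha> \<gamma>] mdc_sup[of ?K "\<alpha> - \<gamma>" \<beta>] k2 lookup_minus prod.distrib)
  also have "\<dots> = (\<Prod>k\<in>?K. fact (Poly_Mapping.lookup \<alpha> k) div fact (Poly_Mapping.lookup \<alpha> k - Poly_Mapping.lookup (\<beta> + \<gamma>) k))"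
  proof (rule prod.cong[OF refl])
    fix k
    have le: "Poly_Mapping.lookup \<beta> k + Poly_Mapping.lookup \<gamma> k \<le> Poly_Mapping.lookup \<alpha> k"
      using assms[rule_format, of k] by (simp add: lookup_add)
    show "((fact (Poly_Mapping.lookup \<alpha> k)::nat) div fact (Poly_Mapping.lookup \<alpha> k - Poly_Mapping.lookup \<gamma> k))
      * (fact (Poly_Mapping.lookup \<alpha> k - Poly_Mapping.lookup \<gamma> k) div fact (Poly_Mapping.lookup \<alpha> k - Poly_Mapping.lookup \<gamma> k - Poly_Mapping.lookup \<beta> k))
      = fact (Poly_Mapping.lookup \<alpha> k) div fact (Poly_Mapping.lookup \<alpha> k - Poly_Mapping.lookup (\<beta> + \<gamma>) k)"
      using fact_div_chain[OF le] by (simp add: lookup_add add.commute)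
  qed
  also have "\<dots> = mon_diff_coeff (\<beta> + \<gamma>) \<alpha>"
    by (simp add: mdc_sup[OF finite_keys order_refl])
  finally show ?thesis by simp
qed

lemma apolar_zero_left[simp]: "apolar 0 f = 0"
  by (rule module_hom.zero[OF lin_apolar_left])

lemma apolar_zero_right[simp]: "apolar \<theta> 0 = 0"
  by (rule module_hom.zero[OF lin_apolar_right])

lemma apolar_mon_comp:
  "apolar (mon \<beta> * mon \<gamma>) (mon \<alpha> :: 'a::field mpoly) = apolar (mon \<beta>) (apolar (mon \<gamma>) (mon \<alpha>))"
proof -
  have iff: "mle (\<beta> + \<gamma>) \<alpha> \<longleftrightarrow> mle \<gamma> \<alpha> \<and> mle \<beta> (\<alpha> - \<gamma>)"
  proof -
    have "(b + g \<le> (a::nat)) = (g \<le> a \<and> b \<le> a - g)" for a b g by arith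
    then show ?thesis by (simp add: lookup_add lookup_minus all_conj_distrib)
  qed
  have eq: "\<alpha> - (\<beta> + \<gamma>) = \<alpha> - \<gamma> - \<beta>"
    by (rule poly_mapping_eqI) (simp add: lookup_add lookup_minus)
  show ?thesis
  proof (cases "mle (\<beta> + \<gamma>) \<alpha>")
    case True
    then show ?thesis
      using iff
      by (simp add: mon_mult apolar_mon_mon apolar_scale_right mdc_comp eq mult.commute)
  next
    case False
    then show ?thesis
      using iff
      by (auto simp: mon_mult apolar_mon_mon apolar_scale_right )
  qed
qed

lemma apolar_diff_left: "apolar (\<theta>1 - \<theta>2) f = apolar \<theta>1 f - apolar \<theta>2 f"
  by (rule module_hom.diff[OF lin_apolar_left])

lemma apolar_sum_left: "apolar (sum g A) f = (\<Sum>x\<in>A. apolar (g x) f)"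
  using module_hom.sum[OF lin_apolar_left] by simp

lemma apolar_sum_right: "apolar \<theta> (sum g A) = (\<Sum>x\<in>A. apolar \<theta> (g x))"
  using module_hom.sum[OF lin_apolar_right] by simp

lemma apolar_mult: "apolar (\<theta> * \<eta>) f = apolar \<theta> (apolar \<eta> (f :: 'a::field mpoly))"
proof -
  have s1: "apolar (mon \<beta> * mon \<gamma>) g = apolar (mon \<beta>) (apolar (mon \<gamma>) g)" for \<beta> \<gamma> and g :: "'a mpoly"
    by (rule lin_ext[OF lin_apolar_right lin_comp[OF lin_apolar_right lin_apolar_right]])
       (rule apolar_mon_comp)
  have s2: "apolar (mon \<beta> * e) g = apolar (mon \<beta>) (apolar e g)" for \<beta> and e g :: "'a mpoly"
  proof (rule lin_ext[of "\<lambda>e. apolar (mon \<beta> * e) g" "\<lambda>e. apolar (mon \<beta>) (apolar e g)"])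
    show "lin (\<lambda>e. apolar (mon \<beta> * e) g)"
      by (rule linI) (simp_all add: distrib_left apolar_add_left mscale_mult_right apolar_scale_left)
    show "lin (\<lambda>e. apolar (mon \<beta>) (apolar e g))"
      by (rule lin_comp[OF lin_apolar_right lin_apolar_left])
  qed (rule s1)
  show ?thesis
  proof (rule lin_ext[of "\<lambda>t. apolar (t * \<eta>) f" "\<lambda>t. apolar t (apolar \<eta> f)"])
    show "lin (\<lambda>t. apolar (t * \<eta>) f)"
      by (rule linI) (simp_all add: distrib_right apolar_add_left mscale_mult_left apolar_scale_left)
  qed (rule lin_apolar_left, rule s2)
qed

lemma span_fill:
  assumes M: "mv.subspace M" and T: "finite T" "M \<subseteq> mv.span T" "card T \<le> mv.dim M"
  shows "T \<subseteq> M"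
proof -
  obtain B where B: "B \<subseteq> M" "mv.independent B" "M \<subseteq> mv.span B" "card B = mv.dim M"
    by (rule mv.basis_exists)
  have BT: "B \<subseteq> mv.span T" using B(1) T(2) by (rule order_trans)
  have "T \<subseteq> mv.span B"
  proof
    fix t assume t: "t \<in> T"
    show "t \<in> mv.span B"
    proof (rule ccontr)
      assume nt: "t \<notin> mv.span B"
      then have ind: "mv.independent (insert t B)" by (rule mv.independent_insertI[OF _ B(2)])
      have tT: "t \<in> mv.span T" using t by (rule mv.span_base)
      have "insert t B \<subseteq> mv.span T" using BT tT by (rule insert_subsetI[rotated])
      then have fc: "finite (insert t B) \<and> card (insert t B) \<le> card T"
        by (rule mv.independent_span_bound[OF T(1) ind])
      have tB: "t \<notin> B" using nt mv.span_base by metis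
      have finB: "finite B" using fc by simp
      have "card (insert t B) = card B + 1" using finB tB by simp
      then show False using fc B(4) T(3) by simp
    qed
  qed
  also have "mv.span B \<subseteq> M" by (rule mv.span_minimal[OF B(1) M])
  finally show ?thesis .
qed

lemma mdeg_sup:
  assumes "finite K" "Poly_Mapping.keys \<alpha> \<subseteq> K"
  shows "mon_deg \<alpha> = (\<Sum>k\<in>K. Poly_Mapping.lookup \<alpha> k)"
  unfolding mon_deg_def
  by (rule sum.mono_neutral_left) (use assms in \<open>auto simp: in_keys_iff\<close>)

lemma keys_add_nat: "Poly_Mapping.keys (\<alpha> + \<beta>) = Poly_Mapping.keys \<alpha> \<union> Poly_Mapping.keys (\<beta> :: nat \<Rightarrow>\<^sub>0 nat)"
  by (auto simp: in_keys_iff lookup_add)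

lemma mdeg_add: "mon_deg (\<alpha> + \<beta>) = mon_deg \<alpha> + mon_deg \<beta>"
proof -
  let ?K = "Poly_Mapping.keys \<alpha> \<union> Poly_Mapping.keys \<beta>"
  show ?thesis
    by (simp add: mdeg_sup[of ?K] keys_add_nat lookup_add sum.distrib)
qed

lemma mdeg_single1: "mon_deg (Poly_Mapping.single t (1::nat)) = 1"
  by (simp add: mon_deg_def)

lemma mdeg_zero: "mon_deg 0 = 0"
  by (simp add: mon_deg_def)

lemma mdeg_diff:
  assumes "mle \<beta> \<alpha>"
  shows "mon_deg (\<alpha> - \<beta>) = mon_deg \<alpha> - mon_deg \<beta>"
proof -
  let ?K = "Poly_Mapping.keys \<alpha>"
  have kb: "Poly_Mapping.keys \<beta> \<subseteq> ?K"
  proof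
    fix x assume "x \<in> Poly_Mapping.keys \<beta>"
    then show "x \<in> ?K" using assms[rule_format, of x] by (metis in_keys_iff le_zero_eq)
  qed
  have kd: "Poly_Mapping.keys (\<alpha> - \<beta>) \<subseteq> ?K"
    by (auto simp: in_keys_iff lookup_minus)
  have "mon_deg (\<alpha> - \<beta>) = (\<Sum>k\<in>?K. Poly_Mapping.lookup (\<alpha> - \<beta>) k)" by (rule mdeg_sup[OF finite_keys kd])
  also have "\<dots> = (\<Sum>k\<in>?K. Poly_Mapping.lookup \<alpha> k) - (\<Sum>k\<in>?K. Poly_Mapping.lookup \<beta> k)"
    using assms by (simp add: lookup_minus sum_subtractf_nat)
  also have "\<dots> = mon_deg \<alpha> - mon_deg \<beta>"
    using mdeg_sup[OF finite_keys kb] mdeg_sup[OF finite_keys order_refl, of \<alpha>] by simp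
  finally show ?thesis .
qed

lemma keys_diff_sub: "Poly_Mapping.keys (\<alpha> - \<beta>) \<subseteq> Poly_Mapping.keys (\<alpha> :: nat \<Rightarrow>\<^sub>0 nat)"
  by (auto simp: in_keys_iff lookup_minus)

lemma lookup_le_mdeg: "Poly_Mapping.lookup \<alpha> k \<le> mon_deg \<alpha>"
proof (cases "k \<in> Poly_Mapping.keys \<alpha>")
  case True
  then show ?thesis unfolding mon_deg_def by (rule member_le_sum) auto
next
  case False
  then show ?thesis by (simp add: in_keys_iff)
qed

lemma mdeg_eq_0: "mon_deg \<alpha> = 0 \<longleftrightarrow> \<alpha> = 0"
proof
  assume "mon_deg \<alpha> = 0"
  then have "Poly_Mapping.lookup \<alpha> k = 0" for k using lookup_le_mdeg[of \<alpha> k] by simp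
  then show "\<alpha> = 0" by (simp add: poly_mapping_eq_iff fun_eq_iff)
qed (simp add: mdeg_zero)

lemma forms_add: "p \<in> forms V i \<Longrightarrow> q \<in> forms V i \<Longrightarrow> p + q \<in> forms V i"
  unfolding forms_def mem_Collect_eq
proof (intro ballI)
  fix \<alpha> assume p: "\<forall>\<alpha>\<in>Poly_Mapping.keys p. Poly_Mapping.keys \<alpha> \<subseteq> V \<and> mon_deg \<alpha> = i"
    and q: "\<forall>\<alpha>\<in>Poly_Mapping.keys q. Poly_Mapping.keys \<alpha> \<subseteq> V \<and> mon_deg \<alpha> = i"
    and a: "\<alpha> \<in> Poly_Mapping.keys (p + q)"
  from subsetD[OF keys_add a] have "\<alpha> \<in> Poly_Mapping.keys p \<or> \<alpha> \<in> Poly_Mapping.keys q" by simp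
  then show "Poly_Mapping.keys \<alpha> \<subseteq> V \<and> mon_deg \<alpha> = i"
  proof
    assume "\<alpha> \<in> Poly_Mapping.keys p" then show ?thesis by (rule bspec[OF p])
  next
    assume "\<alpha> \<in> Poly_Mapping.keys q" then show ?thesis by (rule bspec[OF q])
  qed
qed

lemma forms_scale: "p \<in> forms V i \<Longrightarrow> mscale c p \<in> forms V i"
  unfolding forms_def mem_Collect_eq
proof (intro ballI)
  fix \<alpha> assume p: "\<forall>\<alpha>\<in>Poly_Mapping.keys p. Poly_Mapping.keys \<alpha> \<subseteq> V \<and> mon_deg \<alpha> = i"
    and a: "\<alpha> \<in> Poly_Mapping.keys (mscale c p)"
  from subsetD[OF keys_mscale a] show "Poly_Mapping.keys \<alpha> \<subseteq> V \<and> mon_deg \<alpha> = i" by (rule bspec[OF p])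
qed

lemma forms_zero: "0 \<in> forms V i"
  by (simp add: forms_def)

lemma forms_subspace: "mv.subspace (forms V i :: 'a::field mpoly set)"
  by (rule mv.subspaceI[OF forms_zero forms_add forms_scale])

lemma forms_sum: "(\<And>x. x \<in> A \<Longrightarrow> g x \<in> forms V i) \<Longrightarrow> sum g A \<in> forms V i"
  using mv.subspace_sum[OF forms_subspace, of A g V i] by simp

lemma forms_diff: "p \<in> forms V i \<Longrightarrow> q \<in> forms V i \<Longrightarrow> p - q \<in> forms V i"
  using mv.subspace_diff[OF forms_subspace, of p V i q] by simp

lemma mon_forms: "(mon \<alpha> :: 'a::field mpoly) \<in> forms V i \<longleftrightarrow> Poly_Mapping.keys \<alpha> \<subseteq> V \<and> mon_deg \<alpha> = i"
  unfolding forms_def mon_def by (simp only: mem_Collect_eq keys_single) simp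

lemma forms_keys: "p \<in> forms V i \<Longrightarrow> \<alpha> \<in> Poly_Mapping.keys p \<Longrightarrow> Poly_Mapping.keys \<alpha> \<subseteq> V \<and> mon_deg \<alpha> = i"
  by (simp add: forms_def)

lemma forms_span: "forms V i \<subseteq> mv.span (mon ` {\<alpha>. Poly_Mapping.keys \<alpha> \<subseteq> V \<and> mon_deg \<alpha> = i})"
proof
  fix p :: "'a mpoly" assume p: "p \<in> forms V i"
  have "(\<Sum>\<alpha>\<in>Poly_Mapping.keys p. mscale (Poly_Mapping.lookup p \<alpha>) (mon \<alpha>))
     \<in> mv.span (mon ` {\<alpha>. Poly_Mapping.keys \<alpha> \<subseteq> V \<and> mon_deg \<alpha> = i})"
    using forms_keys[OF p] by (intro mv.span_sum mv.span_scale mv.span_base) auto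
  then show "p \<in> mv.span (mon ` {\<alpha>. Poly_Mapping.keys \<alpha> \<subseteq> V \<and> mon_deg \<alpha> = i})"
    by (subst expand) 
qed

lemma finite_exps:
  assumes "finite V"
  shows "finite {\<alpha>::nat\<Rightarrow>\<^sub>0nat. Poly_Mapping.keys \<alpha> \<subseteq> V \<and> mon_deg \<alpha> = i}"
proof -
  let ?S = "{\<alpha>::nat\<Rightarrow>\<^sub>0nat. Poly_Mapping.keys \<alpha> \<subseteq> V \<and> mon_deg \<alpha> = i}"
  let ?r = "\<lambda>\<alpha>. restrict (Poly_Mapping.lookup \<alpha>) V"
  have inj: "inj_on ?r ?S"
  proof (rule inj_onI)
    fix \<alpha> \<beta> assume a: "\<alpha> \<in> ?S" "\<beta> \<in> ?S" "?r \<alpha> = ?r \<beta>"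
    have "Poly_Mapping.lookup \<alpha> k = Poly_Mapping.lookup \<beta> k" for k
    proof (cases "k \<in> V")
      case True
      then show ?thesis using fun_cong[OF a(3), of k] by simp
    next
      case False
      then have "k \<notin> Poly_Mapping.keys \<alpha>" "k \<notin> Poly_Mapping.keys \<beta>" using a by auto
      then show ?thesis by (simp add: in_keys_iff)
    qed
    then show "\<alpha> = \<beta>" by (simp add: poly_mapping_eq_iff fun_eq_iff)
  qed
  have "?r ` ?S \<subseteq> (\<Pi>\<^sub>E k\<in>V. {..i})"
    using lookup_le_mdeg by (auto simp: PiE_iff)
  moreover have "finite (\<Pi>\<^sub>E k\<in>V. {..i})" using assms by (intro finite_PiE) auto
  ultimately have "finite (?r ` ?S)" by (rule finite_subset)
  then show ?thesis using finite_image_iff[OF inj] by blast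
qed

lemma forms_mult:
  assumes p: "p \<in> forms V a" and q: "q \<in> forms V b"
  shows "p * q \<in> forms V (a + b)"
  unfolding forms_def
proof (intro CollectI ballI)
  fix \<gamma> assume "\<gamma> \<in> Poly_Mapping.keys (p * q)"
  then obtain \<alpha> \<beta> where ab: "\<gamma> = \<alpha> + \<beta>" "\<alpha> \<in> Poly_Mapping.keys p" "\<beta> \<in> Poly_Mapping.keys q"
    using keys_mult by blast
  show "Poly_Mapping.keys \<gamma> \<subseteq> V \<and> mon_deg \<gamma> = a + b"
    using forms_keys[OF p ab(2)] forms_keys[OF q ab(3)] by (simp add: ab(1) keys_add_nat mdeg_add)
qed

lemma forms_polys_in: "forms V i \<subseteq> polys_in V"
  by (auto simp: forms_def polys_in_def)

lemma rank_nullity: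
  fixes \<phi> :: "'a::field mpoly \<Rightarrow> 'a mpoly"
  assumes lin: "lin \<phi>" and W: "mv.subspace W" and S: "finite S" "W \<subseteq> mv.span S"
  shows "mv.dim W = mv.dim {w\<in>W. \<phi> w = 0} + mv.dim (\<phi> ` W)"
proof -
  define Z where "Z = {w\<in>W. \<phi> w = 0}"
  obtain K where K: "K \<subseteq> Z" "mv.independent K" "Z \<subseteq> mv.span K" "card K = mv.dim Z"
    using mv.basis_exists by blast
  have KW: "K \<subseteq> W" using K(1) by (auto simp: Z_def)
  obtain C where C: "K \<subseteq> C" "C \<subseteq> W" "mv.independent C" "W \<subseteq> mv.span C"
    using mv.maximal_independent_subset_extend[OF KW K(2)] by blast
  have finC: "finite C"
    using mv.independent_span_bound[OF S(1) C(3)] C(2) S(2) by auto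
  have finK: "finite K" using finC C(1) finite_subset by blast
  have dimW: "mv.dim W = card C"
    using mv.basis_card_eq_dim[OF C(2) C(4) C(3)] by simp
  define D where "D = C - K"
  have spK: "x \<in> mv.span K" if "x \<in> W" "\<phi> x = 0" for x
    using that K(3) by (auto simp: Z_def)
  have key: "\<forall>x\<in>D. u x = 0" if u: "(\<Sum>x\<in>D. mscale (u x) (\<phi> x)) = 0" for u
  proof -
    let ?v = "\<Sum>x\<in>D. mscale (u x) x"
    have "\<phi> ?v = 0"
      using u by (simp add: module_hom.sum[OF lin] module_hom.scale[OF lin])
    moreover have "?v \<in> W"
      by (rule mv.subspace_sum[OF W]) (use C(2) D_def mv.subspace_scale[OF W] in auto)
    ultimately have "?v \<in> mv.span K" by (rule spK[rotated])
    then obtain w where w: "?v = (\<Sum>y\<in>K. mscale (w y) y)"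
      using mv.span_finite[OF finK] by auto
    define h where "h x = (if x \<in> D then u x else - w x)" for x
    have CDK: "C = D \<union> K" "D \<inter> K = {}" using C(1) by (auto simp: D_def)
    have finD: "finite D" using finC by (simp add: D_def)
    have "(\<Sum>x\<in>C. mscale (h x) x) = (\<Sum>x\<in>D. mscale (h x) x) + (\<Sum>x\<in>K. mscale (h x) x)"
      unfolding CDK(1) by (rule sum.union_disjoint[OF finD finK CDK(2)])
    also have "(\<Sum>x\<in>D. mscale (h x) x) = ?v"
      by (rule sum.cong) (auto simp: h_def)
    also have "(\<Sum>x\<in>K. mscale (h x) x) = (\<Sum>x\<in>K. - mscale (w x) x)"
      by (rule sum.cong) (use CDK(2) in \<open>auto simp: h_def mv.scale_minus_left\<close>)
    also have "\<dots> = - (\<Sum>y\<in>K. mscale (w y) y)" by (simp add: sum_negf)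
    finally have "(\<Sum>x\<in>C. mscale (h x) x) = 0" using w by simp
    then have "\<forall>x\<in>C. h x = 0"
      using mv.independentD[OF C(3) finC order_refl] by blast
    then show ?thesis
    proof (intro ballI)
      fix x assume a: "\<forall>x\<in>C. h x = 0" and x: "x \<in> D"
      then have "h x = 0" using CDK(1) by blast
      then show "u x = 0" using x by (simp add: h_def)
    qed
  qed
  have inj: "inj_on \<phi> D"
  proof (rule inj_onI, rule ccontr)
    fix x y assume xy: "x \<in> D" "y \<in> D" "\<phi> x = \<phi> y" "x \<noteq> y"
    have "\<phi> (x - y) = 0" using xy(3) by (simp add: module_hom.diff[OF lin])
    moreover have "x - y \<in> W"
      using xy C(2) by (auto simp: D_def intro: mv.subspace_diff[OF W])
    ultimately have "x - y \<in> mv.span K" using spK by blast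
    then have "x - y \<in> mv.span (C - {x})"
      using mv.span_mono[of K "C - {x}"] xy C(1) by (auto simp: D_def)
    moreover have "y \<in> mv.span (C - {x})"
      using xy by (intro mv.span_base) (auto simp: D_def)
    ultimately have "(x - y) + y \<in> mv.span (C - {x})" by (rule mv.span_add)
    then have "x \<in> mv.span (C - {x})" by simp
    then have "mv.dependent C" using xy(1) by (auto simp: mv.dependent_def D_def)
    then show False using C(3) by simp
  qed
  have finD: "finite D" using finC by (simp add: D_def)
  have indep: "mv.independent (\<phi> ` D)"
  proof (rule mv.independent_if_scalars_zero)
    show "finite (\<phi> ` D)" using finD by simp
    fix f x assume s: "(\<Sum>x\<in>\<phi> ` D. mscale (f x) x) = 0" and x: "x \<in> \<phi> ` D"
    have "(\<Sum>z\<in>D. mscale (f (\<phi> z)) (\<phi> z)) = 0"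
      using s by (simp add: sum.reindex[OF inj])
    then have "\<forall>z\<in>D. f (\<phi> z) = 0" by (rule key)
    then show "f x = 0" using x by auto
  qed
  have sub1: "\<phi> ` D \<subseteq> \<phi> ` W" using C(2) by (auto simp: D_def)
  have sub2: "\<phi> ` W \<subseteq> mv.span (\<phi> ` D)"
  proof -
    have "\<phi> ` W \<subseteq> mv.span (\<phi> ` C)" by (rule module_hom.spans_image[OF lin C(4)])
    moreover have "\<phi> ` C \<subseteq> mv.span (\<phi> ` D)"
    proof
      fix z assume "z \<in> \<phi> ` C"
      then obtain x where x: "x \<in> C" "z = \<phi> x" by auto
      show "z \<in> mv.span (\<phi> ` D)"
      proof (cases "x \<in> K")
        case True
        then have "\<phi> x = 0" using K(1) by (auto simp: Z_def)
        then show ?thesis using x mv.span_zero by simp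
      next
        case False
        then show ?thesis using x by (intro mv.span_base) (auto simp: D_def)
      qed
    qed
    then have "mv.span (\<phi> ` C) \<subseteq> mv.span (\<phi> ` D)"
      by (rule mv.span_minimal[OF _ mv.subspace_span])
    ultimately show ?thesis by blast
  qed
  have "mv.dim (\<phi> ` W) = card (\<phi> ` D)"
    using mv.basis_card_eq_dim[OF sub1 sub2 indep] by simp
  also have "\<dots> = card D" by (rule card_image[OF inj])
  also have "\<dots> = card C - card K" by (simp add: D_def card_Diff_subset[OF finK C(1)])
  finally have "mv.dim (\<phi> ` W) = card C - card K" .
  moreover have "card K \<le> card C" using card_mono[OF finC C(1)] .
  ultimately show ?thesis using dimW K(4) by (simp add: Z_def)
qed

definition xdeg :: "nat \<Rightarrow> (nat \<Rightarrow>\<^sub>0 nat) \<Rightarrow> nat" where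
  "xdeg n \<alpha> = (\<Sum>j\<le>n. Poly_Mapping.lookup \<alpha> j)"

definition uvexp :: "nat \<Rightarrow> nat \<Rightarrow> (nat \<Rightarrow>\<^sub>0 nat) set" where
  "uvexp n m = (\<lambda>a. Poly_Mapping.single (n+1) a + Poly_Mapping.single (n+2) (m - a)) ` {..m}"

lemma mdeg_single: "mon_deg (Poly_Mapping.single k (a::nat)) = a"
  by (simp add: mon_deg_def)

lemma single_key_inj: "Poly_Mapping.single x (1::'b::zero_neq_one) = Poly_Mapping.single y 1 \<longleftrightarrow> x = y"
  by (metis lookup_single_eq lookup_single_not_eq zero_neq_one)

lemma apolar_mm_no: "\<not> mle \<beta> \<alpha> \<Longrightarrow> apolar (mon \<beta>) (mon \<alpha> :: 'a::field mpoly) = 0"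
  by (subst apolar_mon_mon) (rule if_not_P)

lemma apolar_mm_yes: "mle \<beta> \<alpha> \<Longrightarrow> apolar (mon \<beta>) (mon \<alpha> :: 'a::field mpoly) = mscale (of_nat (mon_diff_coeff \<beta> \<alpha>)) (mon (\<alpha> - \<beta>))"
  by (subst apolar_mon_mon) (rule if_P)

lemma xdeg_add: "xdeg n (\<alpha> + \<beta>) = xdeg n \<alpha> + xdeg n \<beta>"
  by (simp add: xdeg_def lookup_add sum.distrib)

lemma xdeg_single: "xdeg n (Poly_Mapping.single t 1) = (if t \<le> n then 1 else 0)"
  by (simp add: xdeg_def lookup_single when_def)

lemma xdeg_zero_iff: "xdeg n \<alpha> = 0 \<longleftrightarrow> (\<forall>j\<le>n. Poly_Mapping.lookup \<alpha> j = 0)"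
  unfolding xdeg_def by auto

lemma xdeg_mono: "mle \<beta> \<alpha> \<Longrightarrow> xdeg n \<beta> \<le> xdeg n \<alpha>"
  unfolding xdeg_def by (rule sum_mono) simp

lemma uvexp_finite: "finite (uvexp n m)"
  by (simp add: uvexp_def)

lemma uvexp_card_le: "card (uvexp n m) \<le> m + 1"
  unfolding uvexp_def using card_image_le[of "{..m}"] by simp

lemma uvexp_card: "card (uvexp n m) = m + 1"
proof -
  have "inj_on (\<lambda>a. Poly_Mapping.single (n+1) a + Poly_Mapping.single (n+2) (m - a)) {..m}"
  proof (rule inj_onI)
    fix a b assume "Poly_Mapping.single (n+1) a + Poly_Mapping.single (n+2) (m - a)
       = Poly_Mapping.single (n+1) b + Poly_Mapping.single (n+2) (m - b)"
    then have "Poly_Mapping.lookup (Poly_Mapping.single (n+1) a + Poly_Mapping.single (n+2) (m - a)) (n+1)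
       = Poly_Mapping.lookup (Poly_Mapping.single (n+1) b + Poly_Mapping.single (n+2) (m - b)) (n+1)"
      by simp
    then show "a = b" by (simp add: lookup_add lookup_single)
  qed
  then show ?thesis by (simp add: uvexp_def card_image)
qed

lemma uvexp_props:
  assumes "\<alpha> \<in> uvexp n m"
  shows "Poly_Mapping.keys \<alpha> \<subseteq> {n+1, n+2}" "mon_deg \<alpha> = m" "xdeg n \<alpha> = 0"
proof -
  obtain a where a: "a \<le> m" "\<alpha> = Poly_Mapping.single (n+1) a + Poly_Mapping.single (n+2) (m - a)"
    using assms by (auto simp: uvexp_def)
  show k: "Poly_Mapping.keys \<alpha> \<subseteq> {n+1, n+2}"
    by (auto simp: a(2) in_keys_iff lookup_add lookup_single when_def split: if_splits)
  show "mon_deg \<alpha> = m"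
    using a by (simp add: mdeg_add mdeg_single)
  show "xdeg n \<alpha> = 0"
    by (simp add: a(2) xdeg_def lookup_add lookup_single when_def)
qed

lemma uv_char:
  assumes "Poly_Mapping.keys \<alpha> \<subseteq> {n+1, n+2}" "mon_deg \<alpha> = m"
  shows "\<alpha> \<in> uvexp n m"
proof -
  let ?a = "Poly_Mapping.lookup \<alpha> (n+1)" and ?b = "Poly_Mapping.lookup \<alpha> (n+2)"
  have deg: "m = ?a + ?b"
    using mdeg_sup[of "{n+1, n+2}" \<alpha>] assms by simp
  have eq: "\<alpha> = Poly_Mapping.single (n+1) ?a + Poly_Mapping.single (n+2) (m - ?a)"
  proof (rule poly_mapping_eqI)
    fix k
    show "Poly_Mapping.lookup \<alpha> k = Poly_Mapping.lookup (Poly_Mapping.single (n+1) ?a + Poly_Mapping.single (n+2) (m - ?a)) k"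
    proof (cases "k = n+1 \<or> k = n+2")
      case True
      then show ?thesis using deg by (auto simp: lookup_add lookup_single)
    next
      case False
      then have "k \<notin> Poly_Mapping.keys \<alpha>" using assms(1) by blast
      then show ?thesis using False by (simp add: lookup_add lookup_single in_keys_iff)
    qed
  qed
  have "?a \<le> m" using deg by simp
  then show ?thesis unfolding uvexp_def by (subst eq) (rule imageI, simp)
qed

lemma uvforms_span: "forms {n+1, n+2} m \<subseteq> mv.span (mon ` uvexp n m :: 'a::field mpoly set)"
proof -
  have "mon ` {\<alpha>. Poly_Mapping.keys \<alpha> \<subseteq> {n+1, n+2} \<and> mon_deg \<alpha> = m} \<subseteq> (mon ` uvexp n m :: 'a mpoly set)"
    using uv_char by blast
  then have "mv.span (mon ` {\<alpha>. Poly_Mapping.keys \<alpha> \<subseteq> {n+1, n+2} \<and> mon_deg \<alpha> = m}) \<subseteq> mv.span (mon ` uvexp n m :: 'a mpoly set)"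
    by (rule mv.span_mono)
  then show ?thesis using forms_span by blast
qed

lemma mon_independent: "mv.independent (mon ` E :: 'a::field mpoly set)"
  unfolding mv.independent_explicit_finite_subsets
proof (intro allI impI ballI)
  fix S u v assume S: "S \<subseteq> (mon ` E :: 'a mpoly set)" "finite S" and s: "(\<Sum>v\<in>S. mscale (u v) v) = 0" and v: "v \<in> S"
  obtain \<alpha> where \<alpha>: "v = mon \<alpha>" using S v by auto
  have "0 = Poly_Mapping.lookup (\<Sum>v\<in>S. mscale (u v) v) \<alpha>" using s by simp
  also have "\<dots> = (\<Sum>w\<in>S. u w * Poly_Mapping.lookup w \<alpha>)" by (simp add: lookup_sum)
  also have "\<dots> = (\<Sum>w\<in>S. if w = v then u w else 0)"
  proof (rule sum.cong[OF refl])
    fix w assume "w \<in> S"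
    then obtain \<beta> where \<beta>: "w = mon \<beta>" using S by auto
    have "mon \<beta> = (mon \<alpha> :: 'a mpoly) \<longleftrightarrow> \<beta> = \<alpha>" by (simp add: mon_def single_key_inj)
    then show "u w * Poly_Mapping.lookup w \<alpha> = (if w = v then u w else 0)"
      by (auto simp: \<beta> \<alpha> mon_def lookup_single when_def)
  qed
  also have "\<dots> = u v" using S(2) v by simp
  finally show "u v = 0" by simp
qed

lemma mon_inj: "inj (mon :: _ \<Rightarrow> 'a::field mpoly)"
  by (rule injI) (simp add: mon_def single_key_inj)

abbreviation goodf :: "nat \<Rightarrow> nat \<Rightarrow> 'a::field mpoly \<Rightarrow> bool" where
  "goodf n d f \<equiv> (\<forall>\<alpha>\<in>Poly_Mapping.keys f. Poly_Mapping.keys \<alpha> \<subseteq> {..n+2} \<and> mon_deg \<alpha> = d \<and> xdeg n \<alpha> \<le> 1)"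

lemma apolar_expand_right:
  "apolar \<theta> f = (\<Sum>\<alpha>\<in>Poly_Mapping.keys f. mscale (Poly_Mapping.lookup f \<alpha>) (apolar \<theta> (mon \<alpha>)))"
  by (subst expand) (simp add: module_hom.sum[OF lin_apolar_right] module_hom.scale[OF lin_apolar_right])

lemma apolar_expand_left:
  "apolar \<theta> f = (\<Sum>\<beta>\<in>Poly_Mapping.keys \<theta>. mscale (Poly_Mapping.lookup \<theta> \<beta>) (apolar (mon \<beta>) f))"
  by (subst expand) (simp add: module_hom.sum[OF lin_apolar_left] module_hom.scale[OF lin_apolar_left])

lemma X2:
  fixes f :: "'a::field mpoly"
  assumes f: "goodf n d f" and b: "xdeg n \<beta> \<ge> 2"
  shows "apolar (mon \<beta>) f = 0"
proof -
  have "apolar (mon \<beta>) (mon \<alpha>) = (0 :: 'a mpoly)" if "\<alpha> \<in> Poly_Mapping.keys f" for \<alpha>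
  proof -
    have "\<not> mle \<beta> \<alpha>"
      using xdeg_mono[of \<beta> \<alpha> n] f that b by fastforce
    then show ?thesis by (rule apolar_mm_no)
  qed
  then show ?thesis by (subst apolar_expand_right) simp
qed

lemma X1:
  fixes f :: "'a::field mpoly"
  assumes f: "goodf n d f" and b: "xdeg n \<beta> = 1"
  shows "apolar (mon \<beta>) f \<in> forms {n+1, n+2} (d - mon_deg \<beta>)"
proof -
  have "apolar (mon \<beta>) (mon \<alpha> :: 'a mpoly) \<in> forms {n+1, n+2} (d - mon_deg \<beta>)"
    if a: "\<alpha> \<in> Poly_Mapping.keys f" for \<alpha>
  proof (cases "mle \<beta> \<alpha>")
    case False
    then show ?thesis by (simp add: apolar_mm_no forms_zero)
  next
    case True
    have fa: "Poly_Mapping.keys \<alpha> \<subseteq> {..n+2}" "mon_deg \<alpha> = d" "xdeg n \<alpha> \<le> 1" using f a by auto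
    have xe: "xdeg n \<beta> = xdeg n \<alpha>" using xdeg_mono[OF True, of n] fa(3) b by simp
    have "Poly_Mapping.keys (\<alpha> - \<beta>) \<subseteq> {n+1, n+2}"
    proof
      fix k assume k: "k \<in> Poly_Mapping.keys (\<alpha> - \<beta>)"
      then have kk: "k \<in> Poly_Mapping.keys \<alpha>" using keys_diff_sub by blast
      show "k \<in> {n+1, n+2}"
      proof (rule ccontr)
        assume "k \<notin> {n+1, n+2}"
        then have "k \<le> n" using kk fa(1) by auto
        then have "Poly_Mapping.lookup \<beta> k = Poly_Mapping.lookup \<alpha> k"
          using sum_mono_inv[of "Poly_Mapping.lookup \<beta>" "{..n}" "Poly_Mapping.lookup \<alpha>" k] xe True
          by (simp add: xdeg_def)
        then show False using k by (simp add: in_keys_iff lookup_minus)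
      qed
    qed
    then have "mon (\<alpha> - \<beta>) \<in> (forms {n+1, n+2} (d - mon_deg \<beta>) :: 'a mpoly set)"
      using mdeg_diff[OF True] fa(2) by (simp add: mon_forms)
    then show ?thesis unfolding apolar_mm_yes[OF True] by (rule forms_scale)
  qed
  then show ?thesis
    by (subst apolar_expand_right) (intro forms_sum forms_scale)
qed

lemma X12:
  fixes f :: "'a::field mpoly"
  assumes f: "goodf n d f" and b: "xdeg n \<beta> \<ge> 1"
  shows "apolar (mon \<beta>) f \<in> forms {n+1, n+2} (d - mon_deg \<beta>)"
proof (cases "xdeg n \<beta> = 1")
  case True then show ?thesis using X1[OF f] by blast
next
  case False then show ?thesis using X2[OF f, of \<beta>] b by (simp add: forms_zero)
qed

lemma keysP_add: "(\<forall>\<alpha>\<in>Poly_Mapping.keys p. P \<alpha>) \<Longrightarrow> (\<forall>\<alpha>\<in>Poly_Mapping.keys q. P \<alpha>) \<Longrightarrow> (\<forall>\<alpha>\<in>Poly_Mapping.keys (p + q). P \<alpha>)"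
proof
  fix \<alpha> assume p: "\<forall>\<alpha>\<in>Poly_Mapping.keys p. P \<alpha>" and q: "\<forall>\<alpha>\<in>Poly_Mapping.keys q. P \<alpha>" and a: "\<alpha> \<in> Poly_Mapping.keys (p + q)"
  from subsetD[OF keys_add a] have "\<alpha> \<in> Poly_Mapping.keys p \<or> \<alpha> \<in> Poly_Mapping.keys q" by simp
  then show "P \<alpha>"
  proof
    assume "\<alpha> \<in> Poly_Mapping.keys p" then show ?thesis by (rule bspec[OF p])
  next
    assume "\<alpha> \<in> Poly_Mapping.keys q" then show ?thesis by (rule bspec[OF q])
  qed
qed

lemma keysP_sum: "(\<And>x. x \<in> A \<Longrightarrow> \<forall>\<alpha>\<in>Poly_Mapping.keys (h x). P \<alpha>) \<Longrightarrow> \<forall>\<alpha>\<in>Poly_Mapping.keys (sum h A). P \<alpha>"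
proof
  fix \<alpha> assume h: "\<And>x. x \<in> A \<Longrightarrow> \<forall>\<alpha>\<in>Poly_Mapping.keys (h x). P \<alpha>" and a: "\<alpha> \<in> Poly_Mapping.keys (sum h A)"
  from subsetD[OF keys_sum a] obtain x where x: "x \<in> A" "\<alpha> \<in> Poly_Mapping.keys (h x)" by blast
  show "P \<alpha>" by (rule bspec[OF h[OF x(1)] x(2)])
qed

lemma good_f:
  fixes f :: "'a::field mpoly"
  assumes "perazzo_form n d f" "d \<ge> 1"
  shows "goodf n d f"
proof -
  obtain p g where pg: "\<forall>i\<le>n. p i \<in> (forms {n+1, n+2} (d - 1) :: 'a mpoly set)"
    "g \<in> forms {n+1, n+2} d" "f = (\<Sum>i\<le>n. mvar i * p i) + g"
    using assms(1) unfolding perazzo_form_def by blast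
  let ?P = "\<lambda>\<alpha>. Poly_Mapping.keys \<alpha> \<subseteq> {..n+2} \<and> mon_deg \<alpha> = d \<and> xdeg n \<alpha> \<le> 1"
  have uvx: "xdeg n \<gamma> = 0" if "Poly_Mapping.keys \<gamma> \<subseteq> {n+1, n+2}" for \<gamma>
    unfolding xdeg_zero_iff using that by (auto simp: in_keys_iff)
  have "\<forall>\<alpha>\<in>Poly_Mapping.keys (mvar i * p i). ?P \<alpha>" if i: "i \<le> n" for i
  proof
    fix \<alpha> assume "\<alpha> \<in> Poly_Mapping.keys (mvar i * p i)"
    then obtain a \<gamma> where ag: "\<alpha> = a + \<gamma>" "a \<in> Poly_Mapping.keys (mvar i :: 'a mpoly)" "\<gamma> \<in> Poly_Mapping.keys (p i)"
      using keys_mult by blast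
    have a: "a = Poly_Mapping.single i 1" using ag(2) by (simp add: mvar_def)
    have g: "Poly_Mapping.keys \<gamma> \<subseteq> {n+1, n+2}" "mon_deg \<gamma> = d - 1"
      using forms_keys[OF pg(1)[rule_format, OF i] ag(3)] by auto
    have xi: "xdeg n a = 1" unfolding a xdeg_single using i by simp
    show "?P \<alpha>"
      using g i assms(2) uvx[OF g(1)] xi
      by (auto simp: ag(1) keys_add_nat mdeg_add xdeg_add) (auto simp: a mdeg_single)
  qed
  then have "\<forall>\<alpha>\<in>Poly_Mapping.keys (\<Sum>i\<le>n. mvar i * p i). ?P \<alpha>"
    by (intro keysP_sum) auto
  moreover have "\<forall>\<alpha>\<in>Poly_Mapping.keys g. ?P \<alpha>"
  proof
    fix \<alpha> assume "\<alpha> \<in> Poly_Mapping.keys g"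
    then have g: "Poly_Mapping.keys \<alpha> \<subseteq> {n+1, n+2}" "mon_deg \<alpha> = d"
      using forms_keys[OF pg(2)] by auto
    then show "?P \<alpha>" using uvx[OF g(1)] by auto
  qed
  ultimately show ?thesis unfolding pg(3) by (rule keysP_add)
qed

lemma deg1: assumes "mon_deg \<alpha> = 1" shows "\<exists>t. \<alpha> = Poly_Mapping.single t 1"
proof -
  have "\<alpha> \<noteq> 0" using assms by (auto simp: mdeg_zero)
  then obtain t where t: "t \<in> Poly_Mapping.keys \<alpha>" by (metis keys_eq_empty ex_in_conv)
  have s: "mon_deg \<alpha> = Poly_Mapping.lookup \<alpha> t + (\<Sum>k\<in>Poly_Mapping.keys \<alpha> - {t}. Poly_Mapping.lookup \<alpha> k)"
    unfolding mon_deg_def using t by (simp add: sum.remove)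
  have lt: "Poly_Mapping.lookup \<alpha> t \<ge> 1" using t by (simp add: in_keys_iff)
  have lt1: "Poly_Mapping.lookup \<alpha> t = 1" and rest: "(\<Sum>k\<in>Poly_Mapping.keys \<alpha> - {t}. Poly_Mapping.lookup \<alpha> k) = 0"
    using s assms lt by linarith+
  have "Poly_Mapping.lookup \<alpha> k = 0" if "k \<noteq> t" for k
  proof (cases "k \<in> Poly_Mapping.keys \<alpha>")
    case True
    then show ?thesis using rest that by (simp add: sum_eq_0_iff)
  next
    case False then show ?thesis by (simp add: in_keys_iff)
  qed
  then have "\<alpha> = Poly_Mapping.single t 1"
    by (intro poly_mapping_eqI) (auto simp: lookup_single when_def lt1)
  then show ?thesis by blast
qed

lemma forms1_keys:
  assumes "l \<in> forms {..n+2} 1" "\<alpha> \<in> Poly_Mapping.keys l"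
  shows "\<exists>t\<le>n+2. \<alpha> = Poly_Mapping.single t 1"
proof -
  have k: "Poly_Mapping.keys \<alpha> \<subseteq> {..n+2}" "mon_deg \<alpha> = 1" using forms_keys[OF assms] by auto
  obtain t where t: "\<alpha> = Poly_Mapping.single t 1" using deg1[OF k(2)] by blast
  then have "t \<le> n+2" using k(1) by auto
  then show ?thesis using t by blast
qed

definition Aset :: "nat \<Rightarrow> (nat \<Rightarrow>\<^sub>0 nat) set" where
  "Aset n = {Poly_Mapping.single (n+1) 1, Poly_Mapping.single (n+2) 1}"

definition Lpart :: "nat \<Rightarrow> 'a::field mpoly \<Rightarrow> 'a mpoly" where
  "Lpart n l = (\<Sum>\<alpha>\<in>Poly_Mapping.keys l \<inter> Aset n. mscale (Poly_Mapping.lookup l \<alpha>) (mon \<alpha>))"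

definition Ypart :: "nat \<Rightarrow> 'a::field mpoly \<Rightarrow> 'a mpoly" where
  "Ypart n l = (\<Sum>\<alpha>\<in>Poly_Mapping.keys l - Aset n. mscale (Poly_Mapping.lookup l \<alpha>) (mon \<alpha>))"

lemma l_split: "l = Ypart n l + Lpart n l"
proof -
  have "l = (\<Sum>\<alpha>\<in>Poly_Mapping.keys l. mscale (Poly_Mapping.lookup l \<alpha>) (mon \<alpha>))" by (rule expand)
  also have "Poly_Mapping.keys l = (Poly_Mapping.keys l - Aset n) \<union> (Poly_Mapping.keys l \<inter> Aset n)" by blast
  also have "(\<Sum>\<alpha>\<in>(Poly_Mapping.keys l - Aset n) \<union> (Poly_Mapping.keys l \<inter> Aset n). mscale (Poly_Mapping.lookup l \<alpha>) (mon \<alpha>))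
      = Ypart n l + Lpart n l"
    unfolding Ypart_def Lpart_def by (rule sum.union_disjoint) auto
  finally show ?thesis .
qed

lemma part_forms:
  fixes f :: "'a::field mpoly"
  assumes f: "goodf n d f" and S: "finite S" "\<And>\<alpha>. \<alpha> \<in> S \<Longrightarrow> mon_deg \<alpha> = 1 \<and> xdeg n (\<alpha> + \<beta>) \<ge> 1"
  shows "apolar ((\<Sum>\<alpha>\<in>S. mscale (c \<alpha>) (mon \<alpha>)) * mon \<beta>) f \<in> forms {n+1, n+2} (d - (mon_deg \<beta> + 1))"
proof -
  have "apolar ((\<Sum>\<alpha>\<in>S. mscale (c \<alpha>) (mon \<alpha>)) * mon \<beta>) f = (\<Sum>\<alpha>\<in>S. mscale (c \<alpha>) (apolar (mon (\<alpha> + \<beta>)) f))"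
    by (simp add: sum_distrib_right apolar_sum_left mscale_mult_left apolar_scale_left mon_mult)
  also have "\<dots> \<in> forms {n+1, n+2} (d - (mon_deg \<beta> + 1))"
  proof (intro forms_sum forms_scale)
    fix \<alpha> assume a: "\<alpha> \<in> S"
    have "apolar (mon (\<alpha> + \<beta>)) f \<in> forms {n+1, n+2} (d - mon_deg (\<alpha> + \<beta>))"
      using X12[OF f] S(2)[OF a] by blast
    then show "apolar (mon (\<alpha> + \<beta>)) f \<in> forms {n+1, n+2} (d - (mon_deg \<beta> + 1))"
      using S(2)[OF a] by (simp add: mdeg_add add.commute)
  qed
  finally show ?thesis .
qed

lemma hvec_eq:
  fixes f :: "'a::field mpoly"
  shows "hvec n f i = mv.dim ((\<lambda>\<theta>. apolar \<theta> f) ` forms {..n+2} i)"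
proof -
  let ?W = "forms {..n+2} i :: 'a mpoly set"
  have fin: "finite (mon ` {\<alpha>. Poly_Mapping.keys \<alpha> \<subseteq> {..n+2} \<and> mon_deg \<alpha> = i} :: 'a mpoly set)"
    using finite_exps[of "{..n+2}" i] by simp
  have rn: "mv.dim ?W = mv.dim {w\<in>?W. apolar w f = 0} + mv.dim ((\<lambda>\<theta>. apolar \<theta> f) ` ?W)"
    by (rule rank_nullity[OF lin_apolar_left forms_subspace fin forms_span])
  have "Ann n f \<inter> ?W = {w\<in>?W. apolar w f = 0}"
    using forms_polys_in by (auto simp: Ann_def)
  then show ?thesis using rn by (simp add: hvec_def)
qed

lemma uv_keys:
  assumes "Poly_Mapping.keys \<beta> \<subseteq> {..n+2}" "xdeg n \<beta> = 0"
  shows "Poly_Mapping.keys \<beta> \<subseteq> {n+1, n+2}"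
proof
  fix k assume k: "k \<in> Poly_Mapping.keys \<beta>"
  have "\<not> k \<le> n" using k assms(2) by (auto simp: xdeg_zero_iff in_keys_iff)
  then show "k \<in> {n+1, n+2}" using k assms(1) by auto
qed

definition TA :: "nat \<Rightarrow> nat \<Rightarrow> 'a::field mpoly \<Rightarrow> nat \<Rightarrow> 'a mpoly set" where
  "TA n d f i = (\<lambda>\<beta>. apolar (mon \<beta>) f) ` uvexp n i \<union> mon ` uvexp n (d - i)"

lemma TA_finite: "finite (TA n d f i)"
  by (simp add: TA_def uvexp_finite)

lemma TA_card: "i \<le> d \<Longrightarrow> card (TA n d f i) \<le> d + 2"
proof -
  assume i: "i \<le> d"
  have "card (TA n d f i) \<le> card ((\<lambda>\<beta>. apolar (mon \<beta>) f) ` uvexp n i) + card (mon ` uvexp n (d - i) :: 'a mpoly set)"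
    unfolding TA_def by (rule card_Un_le)
  also have "\<dots> \<le> card (uvexp n i) + card (uvexp n (d - i))"
    by (intro add_mono card_image_le uvexp_finite)
  also have "\<dots> \<le> (i + 1) + (d - i + 1)" by (intro add_mono uvexp_card_le)
  finally show ?thesis using i by simp
qed

lemma MA_span:
  fixes f :: "'a::field mpoly"
  assumes f: "goodf n d f" and th: "\<theta> \<in> forms {..n+2} i"
  shows "apolar \<theta> f \<in> mv.span (TA n d f i)"
proof -
  have "apolar (mon \<beta>) f \<in> mv.span (TA n d f i)" if b: "\<beta> \<in> Poly_Mapping.keys \<theta>" for \<beta>
  proof -
    have kb: "Poly_Mapping.keys \<beta> \<subseteq> {..n+2}" "mon_deg \<beta> = i" using forms_keys[OF th b] by auto
    show ?thesis
    proof (cases "xdeg n \<beta> = 0")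
      case True
      then have "\<beta> \<in> uvexp n i" using uv_char[OF uv_keys[OF kb(1) True] kb(2)] by simp
      then show ?thesis unfolding TA_def by (intro mv.span_base) blast
    next
      case False
      then have "apolar (mon \<beta>) f \<in> forms {n+1, n+2} (d - i)" using X12[OF f, of \<beta>] kb(2) by simp
      also have "\<dots> \<subseteq> mv.span (mon ` uvexp n (d - i))" by (rule uvforms_span)
      also have "\<dots> \<subseteq> mv.span (TA n d f i)" unfolding TA_def by (rule mv.span_mono) blast
      finally show ?thesis .
    qed
  qed
  then show ?thesis
    by (subst apolar_expand_left) (intro mv.span_sum mv.span_scale)
qed

lemma apolar_l_mon:
  fixes l :: "'a::field mpoly"
  assumes l: "l \<in> forms {..n+2} 1" and \<alpha>: "\<alpha> \<in> uvexp n m"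
  shows "apolar l (mon \<alpha>) \<in> forms {n+1, n+2} (m - 1)" "m = 0 \<Longrightarrow> apolar l (mon \<alpha>) = 0"
proof -
  have ap: "apolar l (mon \<alpha>) = (\<Sum>\<gamma>\<in>Poly_Mapping.keys l. mscale (Poly_Mapping.lookup l \<gamma>) (apolar (mon \<gamma>) (mon \<alpha>)))"
    by (rule apolar_expand_left)
  have pa: "Poly_Mapping.keys \<alpha> \<subseteq> {n+1, n+2}" "mon_deg \<alpha> = m" using uvexp_props[OF \<alpha>] by auto
  have t1: "apolar (mon \<gamma>) (mon \<alpha>) \<in> (forms {n+1, n+2} (m - 1) :: 'a mpoly set)" if g: "\<gamma> \<in> Poly_Mapping.keys l" for \<gamma>
  proof -
    obtain t where t: "\<gamma> = Poly_Mapping.single t 1" using forms1_keys[OF l g] by blast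
    show ?thesis
    proof (cases "mle \<gamma> \<alpha>")
      case False
      then show ?thesis by (simp add: apolar_mm_no forms_zero)
    next
      case True
      have "mon (\<alpha> - \<gamma>) \<in> (forms {n+1, n+2} (m - 1) :: 'a mpoly set)"
        unfolding mon_forms using keys_diff_sub[of \<alpha> \<gamma>] pa mdeg_diff[OF True] t
        by (auto simp: mdeg_single)
      then show ?thesis unfolding apolar_mm_yes[OF True] by (rule forms_scale)
    qed
  qed
  show "apolar l (mon \<alpha>) \<in> forms {n+1, n+2} (m - 1)"
    unfolding ap by (intro forms_sum forms_scale t1)
  assume m0: "m = 0"
  then have a0: "\<alpha> = 0" using pa(2) mdeg_eq_0 by auto
  have "apolar (mon \<gamma>) (mon \<alpha>) = (0 :: 'a mpoly)" if g: "\<gamma> \<in> Poly_Mapping.keys l" for \<gamma>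
  proof -
    obtain t where t: "\<gamma> = Poly_Mapping.single t 1" using forms1_keys[OF l g] by blast
    have "\<not> mle \<gamma> \<alpha>"
    proof
      assume "mle \<gamma> \<alpha>"
      then have "Poly_Mapping.lookup \<gamma> t \<le> Poly_Mapping.lookup \<alpha> t" by blast
      then show False by (simp add: t a0)
    qed
    then show ?thesis by (rule apolar_mm_no)
  qed
  then show "apolar l (mon \<alpha>) = 0" unfolding ap by simp
qed

lemma kernel:
  fixes l :: "'a::field mpoly"
  assumes l: "l \<in> forms {..n+2} 1"
  shows "\<exists>w\<in>mv.span (mon ` uvexp n m :: 'a mpoly set). w \<noteq> 0 \<and> apolar l w = 0"
proof (cases "m = 0")
  case True
  have z: "(0 :: nat \<Rightarrow>\<^sub>0 nat) \<in> uvexp n m" using True by (intro uv_char) (auto simp: mdeg_zero)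
  then have "mon 0 \<in> mv.span (mon ` uvexp n m :: 'a mpoly set)" by (intro mv.span_base imageI)
  moreover have "mon 0 \<noteq> (0 :: 'a mpoly)" by (simp add: mon_def)
  moreover have "apolar l (mon 0) = 0" using apolar_l_mon(2)[OF l z True] .
  ultimately show ?thesis by blast
next
  case False
  let ?S = "mon ` uvexp n m :: 'a mpoly set"
  let ?W = "mv.span ?S"
  let ?Z = "{w\<in>?W. apolar l w = 0}"
  have rn: "mv.dim ?W = mv.dim ?Z + mv.dim (apolar l ` ?W)"
    by (rule rank_nullity[OF lin_apolar_right mv.subspace_span _ order_refl]) (simp add: uvexp_finite)
  have "mv.dim ?W = card ?S" by (simp add: mv.dim_eq_card_independent mon_independent)
  also have "\<dots> = m + 1" by (simp add: card_image[OF inj_on_subset[OF mon_inj]] uvexp_card)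
  finally have dW: "mv.dim ?W = m + 1" .
  have "apolar l ` ?W = mv.span (apolar l ` ?S)"
    by (rule module_hom.span_image[OF lin_apolar_right, symmetric])
  also have "\<dots> \<subseteq> mv.span (mon ` uvexp n (m - 1))"
  proof (rule mv.span_minimal[OF _ mv.subspace_span])
    show "apolar l ` ?S \<subseteq> mv.span (mon ` uvexp n (m - 1))"
      using apolar_l_mon(1)[OF l] uvforms_span by blast
  qed
  finally have "mv.dim (apolar l ` ?W) \<le> card (mon ` uvexp n (m - 1) :: 'a mpoly set)"
    by (intro mv.dim_le_card) (simp_all add: uvexp_finite)
  also have "\<dots> \<le> card (uvexp n (m - 1))" by (intro card_image_le uvexp_finite)
  also have "\<dots> \<le> m" using uvexp_card_le[of n "m - 1"] False by simp
  finally have "mv.dim ?Z \<ge> 1" using rn dW by simp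
  show ?thesis
  proof (rule ccontr)
    assume "\<not> ?thesis"
    then have "?Z \<subseteq> mv.span {}" by auto
    then have "mv.dim ?Z \<le> card ({} :: 'a mpoly set)" by (intro mv.dim_le_card) auto
    then show False using \<open>mv.dim ?Z \<ge> 1\<close> by simp
  qed
qed

definition TB :: "nat \<Rightarrow> nat \<Rightarrow> 'a::field mpoly \<Rightarrow> 'a mpoly \<Rightarrow> nat \<Rightarrow> 'a mpoly set" where
  "TB n d f l j = (\<lambda>\<beta>. apolar (Lpart n l * mon \<beta>) f) ` uvexp n (j - 1) \<union> mon ` uvexp n (d - j)"

lemma TB_finite: "finite (TB n d f l j)"
  by (simp add: TB_def uvexp_finite)

lemma TB_card: "1 \<le> j \<Longrightarrow> j \<le> d \<Longrightarrow> card (TB n d f l j) \<le> d + 1"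
proof -
  assume j: "1 \<le> j" "j \<le> d"
  have "card (TB n d f l j) \<le> card ((\<lambda>\<beta>. apolar (Lpart n l * mon \<beta>) f) ` uvexp n (j - 1)) + card (mon ` uvexp n (d - j) :: 'a mpoly set)"
    unfolding TB_def by (rule card_Un_le)
  also have "\<dots> \<le> card (uvexp n (j - 1)) + card (uvexp n (d - j))"
    by (intro add_mono card_image_le uvexp_finite)
  also have "\<dots> \<le> (j - 1 + 1) + (d - j + 1)" by (intro add_mono uvexp_card_le)
  finally show ?thesis using j by simp
qed

lemma stepB_elem:
  fixes f l :: "'a::field mpoly"
  assumes f: "goodf n d f" and l: "l \<in> forms {..n+2} 1" and j: "1 \<le> j"
    and th: "\<theta> \<in> forms {..n+2} (j - 1)"
  shows "apolar (l * \<theta>) f \<in> mv.span (TB n d f l j)"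
proof -
  have UVsub: "forms {n+1, n+2} (d - j) \<subseteq> mv.span (TB n d f l j)"
  proof -
    have "forms {n+1, n+2} (d - j) \<subseteq> mv.span (mon ` uvexp n (d - j) :: 'a mpoly set)" by (rule uvforms_span)
    also have "\<dots> \<subseteq> mv.span (TB n d f l j)" unfolding TB_def by (rule mv.span_mono) blast
    finally show ?thesis .
  qed
  have one: "apolar (l * mon \<beta>) f \<in> mv.span (TB n d f l j)" if b: "\<beta> \<in> Poly_Mapping.keys \<theta>" for \<beta>
  proof -
    have kb: "Poly_Mapping.keys \<beta> \<subseteq> {..n+2}" "mon_deg \<beta> = j - 1" using forms_keys[OF th b] by auto
    have dj: "d - (mon_deg \<beta> + 1) = d - j" using kb(2) j by simp
    have split: "apolar (l * mon \<beta>) f = apolar (Ypart n l * mon \<beta>) f + apolar (Lpart n l * mon \<beta>) f"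
      by (subst l_split[of l n]) (simp add: distrib_right apolar_add_left)
    have Y: "apolar (Ypart n l * mon \<beta>) f \<in> forms {n+1, n+2} (d - j)"
    proof -
      have "apolar (Ypart n l * mon \<beta>) f \<in> forms {n+1, n+2} (d - (mon_deg \<beta> + 1))"
        unfolding Ypart_def
      proof (rule part_forms[OF f])
        fix \<alpha> assume a: "\<alpha> \<in> Poly_Mapping.keys l - Aset n"
        obtain t where t: "t \<le> n+2" "\<alpha> = Poly_Mapping.single t 1" using forms1_keys[OF l] a by blast
        have "t \<noteq> n+1" "t \<noteq> n+2" using a t by (auto simp: Aset_def)
        then have "t \<le> n" using t by auto
        then have "xdeg n \<alpha> = 1" unfolding t(2) xdeg_single by simp
        then show "mon_deg \<alpha> = 1 \<and> 1 \<le> xdeg n (\<alpha> + \<beta>)"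
          by (simp add: t(2) mdeg_single xdeg_add)
      qed simp
      then show ?thesis using dj by simp
    qed
    have L: "apolar (Lpart n l * mon \<beta>) f \<in> mv.span (TB n d f l j)"
    proof (cases "xdeg n \<beta> = 0")
      case True
      then have "\<beta> \<in> uvexp n (j - 1)" using uv_char[OF uv_keys[OF kb(1) True] kb(2)] by simp
      then show ?thesis unfolding TB_def by (intro mv.span_base) blast
    next
      case False
      have "apolar (Lpart n l * mon \<beta>) f \<in> forms {n+1, n+2} (d - (mon_deg \<beta> + 1))"
        unfolding Lpart_def
      proof (rule part_forms[OF f])
        fix \<alpha> assume a: "\<alpha> \<in> Poly_Mapping.keys l \<inter> Aset n"
        obtain t where t: "t \<le> n+2" "\<alpha> = Poly_Mapping.single t 1" using forms1_keys[OF l] a by blast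
        show "mon_deg \<alpha> = 1 \<and> 1 \<le> xdeg n (\<alpha> + \<beta>)"
          using False by (simp add: t(2) mdeg_single xdeg_add)
      qed simp
      then show ?thesis using dj UVsub by auto
    qed
    show ?thesis unfolding split by (rule mv.span_add[OF _ L]) (use Y UVsub in blast)
  qed
  have "apolar (l * \<theta>) f = apolar l (apolar \<theta> f)" by (rule apolar_mult)
  also have "\<dots> = (\<Sum>\<beta>\<in>Poly_Mapping.keys \<theta>. mscale (Poly_Mapping.lookup \<theta> \<beta>) (apolar (l * mon \<beta>) f))"
    by (subst apolar_expand_left)
       (simp add: module_hom.sum[OF lin_apolar_right] module_hom.scale[OF lin_apolar_right] apolar_mult)
  also have "\<dots> \<in> mv.span (TB n d f l j)"
    by (intro mv.span_sum mv.span_scale one)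
  finally show ?thesis .
qed

definition surjat :: "nat \<Rightarrow> 'a::field mpoly \<Rightarrow> 'a mpoly \<Rightarrow> nat \<Rightarrow> bool" where
  "surjat n f l i \<longleftrightarrow> (\<forall>\<eta>\<in>forms {..n+2} (i+1). \<exists>\<theta>\<in>forms {..n+2} i. \<eta> - l * \<theta> \<in> Ann n f)"

lemma mvar_forms: "t \<le> n + 2 \<Longrightarrow> (mvar t :: 'a::field mpoly) \<in> forms {..n+2} 1"
  unfolding mvar_mon mon_forms by (simp add: mdeg_single)

lemma stepC_one:
  fixes f l :: "'a::field mpoly"
  assumes l: "l \<in> forms {..n+2} 1" and s: "surjat n f l i"
  shows "surjat n f l (Suc i)"
  unfolding surjat_def
proof
  fix \<eta> :: "'a mpoly" assume eta: "\<eta> \<in> forms {..n+2} (Suc i + 1)"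
  have ex: "\<exists>\<theta>\<in>forms {..n+2} (i+1). apolar (mon \<alpha> - l * \<theta>) f = 0" if a: "\<alpha> \<in> Poly_Mapping.keys \<eta>" for \<alpha>
  proof -
    have ka: "Poly_Mapping.keys \<alpha> \<subseteq> {..n+2}" "mon_deg \<alpha> = i + 2" using forms_keys[OF eta a] by auto
    then have "\<alpha> \<noteq> 0" by (auto simp: mdeg_zero)
    then obtain t where t: "t \<in> Poly_Mapping.keys \<alpha>" by (metis keys_eq_empty ex_in_conv)
    let ?e = "Poly_Mapping.single t (1::nat)"
    let ?a = "\<alpha> - ?e"
    have le: "mle ?e \<alpha>"
    proof
      fix k show "Poly_Mapping.lookup ?e k \<le> Poly_Mapping.lookup \<alpha> k"
        using t by (auto simp: lookup_single when_def in_keys_iff)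
    qed
    have aeq: "\<alpha> = ?e + ?a"
    proof (rule poly_mapping_eqI)
      fix k show "Poly_Mapping.lookup \<alpha> k = Poly_Mapping.lookup (?e + ?a) k"
        using le[rule_format, of k] by (simp add: lookup_add lookup_minus)
    qed
    have ka': "Poly_Mapping.keys ?a \<subseteq> {..n+2}" "mon_deg ?a = i + 1"
      using keys_diff_sub[of \<alpha> ?e] ka mdeg_diff[OF le] by (auto simp: mdeg_single)
    have "mon ?a \<in> (forms {..n+2} (i+1) :: 'a mpoly set)" using ka' by (simp add: mon_forms)
    then obtain \<theta>' where th': "\<theta>' \<in> forms {..n+2} i" "mon ?a - l * \<theta>' \<in> Ann n f"
      using s unfolding surjat_def by blast
    have z: "apolar (mon ?a - l * \<theta>') f = 0" using th'(2) by (simp add: Ann_def)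
    have tn: "t \<le> n + 2" using t ka(1) by auto
    have thf: "mvar t * \<theta>' \<in> forms {..n+2} (i+1)"
      using forms_mult[OF mvar_forms[OF tn] th'(1)] by simp
    have eqm: "mon \<alpha> - l * (mvar t * \<theta>') = mvar t * (mon ?a - l * \<theta>')"
    proof -
      have "mvar t * mon ?a = (mon \<alpha> :: 'a mpoly)" by (subst aeq) (simp add: mvar_mon mon_mult)
      then show ?thesis by (simp add: right_diff_distrib mult.left_commute)
    qed
    have "apolar (mon \<alpha> - l * (mvar t * \<theta>')) f = 0" unfolding eqm apolar_mult z by simp
    then show ?thesis using thf by blast
  qed
  then obtain th where th: "\<And>\<alpha>. \<alpha> \<in> Poly_Mapping.keys \<eta> \<Longrightarrow> th \<alpha> \<in> forms {..n+2} (i+1) \<and> apolar (mon \<alpha> - l * th \<alpha>) f = 0"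
    by metis
  define \<theta> where "\<theta> = (\<Sum>\<alpha>\<in>Poly_Mapping.keys \<eta>. mscale (Poly_Mapping.lookup \<eta> \<alpha>) (th \<alpha>))"
  have thF: "\<theta> \<in> forms {..n+2} (Suc i)" unfolding \<theta>_def using th by (auto intro!: forms_sum forms_scale)
  have "\<eta> - l * \<theta> = (\<Sum>\<alpha>\<in>Poly_Mapping.keys \<eta>. mscale (Poly_Mapping.lookup \<eta> \<alpha>) (mon \<alpha>))
        - (\<Sum>\<alpha>\<in>Poly_Mapping.keys \<eta>. mscale (Poly_Mapping.lookup \<eta> \<alpha>) (l * th \<alpha>))"
    by (subst expand[of \<eta>]) (simp add: \<theta>_def sum_distrib_left mscale_mult_right)
  also have "\<dots> = (\<Sum>\<alpha>\<in>Poly_Mapping.keys \<eta>. mscale (Poly_Mapping.lookup \<eta> \<alpha>) (mon \<alpha> - l * th \<alpha>))"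
    by (simp add: sum_subtractf mv.scale_right_diff_distrib)
  finally have eq: "\<eta> - l * \<theta> = \<dots>" .
  have ap: "apolar (\<eta> - l * \<theta>) f = 0"
    unfolding eq by (simp add: apolar_sum_left apolar_scale_left th)
  have "\<eta> - l * \<theta> \<in> forms {..n+2} (Suc i + 1)"
  proof -
    have "l * \<theta> \<in> forms {..n+2} (Suc i + 1)" using forms_mult[OF l thF] by (simp add: add.commute)
    then show ?thesis using forms_diff[OF eta] by blast
  qed
  then have "\<eta> - l * \<theta> \<in> polys_in {..n+2}" using forms_polys_in by blast
  then have "\<eta> - l * \<theta> \<in> Ann n f" using ap by (simp add: Ann_def)
  then show "\<exists>\<theta>\<in>forms {..n+2} (Suc i). \<eta> - l * \<theta> \<in> Ann n f" using thF by blast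
qed

lemma stepC:
  fixes f l :: "'a::field mpoly"
  assumes l: "l \<in> forms {..n+2} 1" and s: "surjat n f l i" and ij: "i \<le> j"
  shows "surjat n f l j"
  using ij
proof (induction j rule: dec_induct)
  case base then show ?case using s .
next
  case (step k) then show ?case using stepC_one[OF l] by blast
qed

theorem proposition4p5:
  fixes f :: "'a::field_char_0 mpoly" and n d :: nat
  assumes "alg_closed TYPE('a)"
    and "n \<ge> 2" and "d \<ge> n + 1"
    and "perazzo_form n d f"
    and "WLP n f"
  shows "card {i. i \<le> d \<and> hvec n f i = d + 2} \<le> 1"
proof -
  have f: "goodf n d f" by (rule good_f[OF assms(4)]) (use assms(3) in simp)
  obtain l where l: "l \<in> forms {..n+2} 1"
    and w: "\<And>i. (\<forall>\<theta>\<in>forms {..n+2} i. l * \<theta> \<in> Ann n f \<longrightarrow> \<theta> \<in> Ann n f) \<or> surjat n f l i"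
    using assms(5) unfolding WLP_def surjat_def by blast
  have A: "surjat n f l i" if i: "i \<le> d" "hvec n f i = d + 2" for i
  proof -
    let ?M = "(\<lambda>\<theta>. apolar \<theta> f) ` forms {..n+2} i"
    have dM: "mv.dim ?M = d + 2" using i(2) hvec_eq[of n f i] by simp
    have sM: "mv.subspace ?M"
      by (rule module_hom.subspace_image[OF lin_apolar_left forms_subspace])
    have MT: "?M \<subseteq> mv.span (TA n d f i)" using MA_span[OF f] by blast
    have "TA n d f i \<subseteq> ?M"
      by (rule span_fill[OF sM TA_finite MT]) (use TA_card[OF i(1), of n f] dM in simp)
    then have "mon ` uvexp n (d - i) \<subseteq> ?M" unfolding TA_def by blast
    then have spM: "mv.span (mon ` uvexp n (d - i)) \<subseteq> ?M" by (rule mv.span_minimal[OF _ sM])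
    obtain w where w0: "w \<in> mv.span (mon ` uvexp n (d - i))" "w \<noteq> 0" "apolar l w = 0"
      using kernel[OF l, of "d - i"] by blast
    then obtain \<theta> where th: "\<theta> \<in> forms {..n+2} i" "w = apolar \<theta> f" using spM by blast
    have "l * \<theta> \<in> forms {..n+2} (1 + i)" by (rule forms_mult[OF l th(1)])
    then have "l * \<theta> \<in> polys_in {..n+2}" using forms_polys_in by blast
    moreover have "apolar (l * \<theta>) f = 0" using w0(3) th(2) by (simp add: apolar_mult)
    ultimately have "l * \<theta> \<in> Ann n f" by (simp add: Ann_def)
    moreover have "\<theta> \<notin> Ann n f" using w0(2) th(2) by (simp add: Ann_def)
    ultimately have "\<not> (\<forall>\<theta>\<in>forms {..n+2} i. l * \<theta> \<in> Ann n f \<longrightarrow> \<theta> \<in> Ann n f)" using th(1) by blast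
    then show ?thesis using w[of i] by blast
  qed
  have B: "hvec n f j \<le> d + 1" if j: "1 \<le> j" "j \<le> d" "surjat n f l (j - 1)" for j
  proof -
    let ?M = "(\<lambda>\<theta>. apolar \<theta> f) ` forms {..n+2} j"
    have "?M \<subseteq> mv.span (TB n d f l j)"
    proof
      fix x assume "x \<in> ?M"
      then obtain \<theta> where th: "\<theta> \<in> forms {..n+2} j" "x = apolar \<theta> f" by blast
      have "\<theta> \<in> forms {..n+2} (j - 1 + 1)" using th(1) j(1) by simp
      then obtain \<theta>' where th': "\<theta>' \<in> forms {..n+2} (j - 1)" "\<theta> - l * \<theta>' \<in> Ann n f"
        using j(3) unfolding surjat_def by blast
      have "apolar \<theta> f = apolar (l * \<theta>') f"
        using th'(2) by (simp add: Ann_def apolar_diff_left)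
      then show "x \<in> mv.span (TB n d f l j)"
        using th(2) stepB_elem[OF f l j(1) th'(1)] by simp
    qed
    then have "mv.dim ?M \<le> card (TB n d f l j)" by (rule mv.dim_le_card[OF _ TB_finite])
    also have "\<dots> \<le> d + 1" by (rule TB_card[OF j(1,2)])
    finally show ?thesis using hvec_eq[of n f j] by simp
  qed
  let ?T = "{i. i \<le> d \<and> hvec n f i = d + 2}"
  have fin: "finite ?T" by (rule finite_subset[of _ "{..d}"]) auto
  have lt: False if ab: "a \<in> ?T" "b \<in> ?T" "a < b" for a b
  proof -
    have sa: "surjat n f l a" using A ab(1) by blast
    have sb: "surjat n f l (b - 1)" by (rule stepC[OF l sa]) (use ab(3) in simp)
    have "hvec n f b \<le> d + 1" by (rule B) (use ab sb in auto)
    then show False using ab(2) by simp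
  qed
  have "\<forall>a\<in>?T. \<forall>b\<in>?T. a = b"
  proof (intro ballI)
    fix a b assume ab: "a \<in> ?T" "b \<in> ?T"
    show "a = b"
    proof (rule linorder_cases[of a b])
      assume "a < b" then show ?thesis using lt ab by blast
    next
      assume "b < a" then show ?thesis using lt ab by blast
    qed
  qed
  then show ?thesis using card_le_Suc0_iff_eq[OF fin] by simp
qed

end
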